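(* Let $d\geq 2$, let $\mathcal S$ be the set of $d\times d$ density operators, and let $\mathrm d\rho$ be any probability measure on $\mathcal S$. Define $$B_1=1-\tfrac14\,\mathrm{Tr}\big(\mathbb E_\rho[\rho^2]-\mathbb E_\rho[\rho]^2\big),\qquad B_2=\frac1d\left(1+\sqrt{d-1}\,\sqrt{d\left(\mathbb E_\rho\Big[\sqrt{1-\mathrm{Tr}(\rho^2)}\Big]^2+\mathrm{Tr}\big(\mathbb E_\rho[\rho]^2\big)\right)-1}\right).$$ Then either $B_1=1$, or $B_2<B_1$.
   Context: $\mathbb E_\rho$ denotes expectation with respect to $\mathrm d\rho$. ($B_1$ and $B_2$ are both upper bounds on $\max_{\sigma\in\mathcal S}\mathbb E_\rho[F(\rho,\sigma)]$, $F$ being the fidelity.) *)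

theory Defs
  imports "HOL-Analysis.Analysis" "HOL-Probability.Probability"
begin

text \<open>Complex d x d matrices are represented as complex^'n^'n with d = CARD('n).
  Matrix product is (**), trace is the library trace.\<close>

definition hermitian_mat :: "complex^'n^'n \<Rightarrow> bool" where
  "hermitian_mat A \<longleftrightarrow> (\<forall>i j. A $ i $ j = cnj (A $ j $ i))"

definition psd_mat :: "complex^'n^'n \<Rightarrow> bool" where
  "psd_mat A \<longleftrightarrow> (\<forall>x::complex^'n.
     Im (\<Sum>i\<in>UNIV. cnj (x $ i) * (A *v x) $ i) = 0 \<and>
     Re (\<Sum>i\<in>UNIV. cnj (x $ i) * (A *v x) $ i) \<ge> 0)"

definition density_ops :: "(complex^'n^'n) set" where
  "density_ops = {\<rho>. hermitian_mat \<rho> \<and> psd_mat \<rho> \<and> trace \<rho> = 1}"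

end

theory Submission
  imports Defs
begin

lemma qform_two:
  fixes A :: "complex^'n^'n" and c :: complex
  assumes "i \<noteq> k"
  defines "x \<equiv> (\<chi> j. if j = i then 1 else if j = k then c else 0) :: complex^'n"
  shows "(\<Sum>j\<in>UNIV. cnj (x $ j) * (A *v x) $ j) =
     A$i$i + A$i$k * c + cnj c * A$k$i + cnj c * A$k$k * c"
proof -
  have Ax: "(A *v x) $ j = A$j$i + A$j$k * c" for j
  proof -
    have "(A *v x) $ j = (\<Sum>l\<in>UNIV. A$j$l * x$l)" by (simp add: matrix_vector_mult_def)
    also have "\<dots> = (\<Sum>l\<in>{i,k}. A$j$l * x$l)"
      by (rule sum.mono_neutral_right) (auto simp: x_def)
    also have "\<dots> = A$j$i + A$j$k * c" using assms(1) by (simp add: x_def)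
    finally show ?thesis .
  qed
  have "(\<Sum>j\<in>UNIV. cnj (x $ j) * (A *v x) $ j) = (\<Sum>j\<in>{i,k}. cnj (x $ j) * (A *v x) $ j)"
    by (rule sum.mono_neutral_right) (auto simp: x_def)
  also have "\<dots> = A$i$i + A$i$k * c + cnj c * A$k$i + cnj c * A$k$k * c"
    using assms(1) by (simp add: Ax) (simp add: x_def algebra_simps)
  finally show ?thesis .
qed

lemma qform_one:
  fixes A :: "complex^'n^'n" and i :: 'n
  defines "x \<equiv> (\<chi> j. if j = i then 1 else 0) :: complex^'n"
  shows "(\<Sum>j\<in>UNIV. cnj (x $ j) * (A *v x) $ j) = A$i$i"
proof -
  have Ax: "(A *v x) $ j = A$j$i" for j
  proof -
    have "(A *v x) $ j = (\<Sum>l\<in>UNIV. A$j$l * x$l)" by (simp add: matrix_vector_mult_def)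
    also have "\<dots> = (\<Sum>l\<in>{i}. A$j$l * x$l)"
      by (rule sum.mono_neutral_right) (auto simp: x_def)
    finally show ?thesis by (simp add: x_def)
  qed
  have "(\<Sum>j\<in>UNIV. cnj (x $ j) * (A *v x) $ j) = (\<Sum>j\<in>{i}. cnj (x $ j) * (A *v x) $ j)"
    by (rule sum.mono_neutral_right) (auto simp: x_def)
  then show ?thesis by (simp add: Ax) (simp add: x_def)
qed

lemma diag_nonneg:
  assumes "psd_mat A" shows "Re (A$i$i) \<ge> 0"
proof -
  have "0 \<le> Re (\<Sum>j\<in>UNIV. cnj (x $ j) * (A *v x) $ j)" for x
    using assms unfolding psd_mat_def by blast
  from this[of "\<chi> j. if j = i then 1 else 0"] show ?thesis by (simp only: qform_one)
qed

lemma herm_diag: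
  assumes "hermitian_mat A" shows "Im (A$i$i) = 0"
proof -
  have "A$i$i = cnj (A$i$i)" using assms unfolding hermitian_mat_def by blast
  then show ?thesis by (simp add: complex_eq_iff)
qed

lemma ring_id:
  fixes z w T b :: "'a::comm_ring_1"
  shows "z * (- T * w) + (- T * z) * w + (- T * z) * b * (- T * w) = - 2 * T * (z * w) + T * T * b * (z * w)"
  by (simp add: algebra_simps)

lemma offdiag_bound:
  fixes A :: "complex^'n^'n"
  assumes h: "hermitian_mat A" and p: "psd_mat A"
  shows "(cmod (A$i$k))^2 \<le> Re (A$i$i) * Re (A$k$k)"
proof (cases "i = k")
  case True
  then show ?thesis using herm_diag[OF h, of i]
    by (simp add: cmod_power2) (simp add: power2_eq_square)
next
  case False
  let ?n = "(cmod (A$i$k))^2"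
  let ?a = "Re (A$i$i)" and ?b = "Re (A$k$k)"
  have ineq: "?a - 2*t*?n + t^2 * ?n * ?b \<ge> 0" for t :: real
  proof -
    let ?c = "- of_real t * cnj (A$i$k)"
    have "0 \<le> Re (\<Sum>j\<in>UNIV. cnj (x $ j) * (A *v x) $ j)" for x
      using p unfolding psd_mat_def by blast
    from this[of "\<chi> j. if j = i then 1 else if j = k then ?c else 0"]
    have "Re (A$i$i + A$i$k * ?c + cnj ?c * A$k$i + cnj ?c * A$k$k * ?c) \<ge> 0"
      by (simp only: qform_two[OF False])
    moreover have "A$k$i = cnj (A$i$k)" using h unfolding hermitian_mat_def by blast
    moreover have "Im (A$k$k) = 0" using herm_diag[OF h] .
    ultimately show ?thesis
    proof -
      assume q: "Re (A$i$i + A$i$k * ?c + cnj ?c * A$k$i + cnj ?c * A$k$k * ?c) \<ge> 0"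
        and hk: "A$k$i = cnj (A$i$k)" and im: "Im (A$k$k) = 0"
      have Akk: "A$k$k = of_real ?b" using im by (simp add: complex_eq_iff)
      have zz: "A$i$k * cnj (A$i$k) = of_real ?n" by (rule complex_norm_square[symmetric])
      have cc: "cnj ?c = - of_real t * A$i$k" by simp
      obtain bb where bb: "bb = (of_real ?b :: complex)" by blast
      have Akk': "A$k$k = bb" using Akk bb by simp
      have "A$i$k * ?c + cnj ?c * A$k$i + cnj ?c * A$k$k * ?c
            = - 2 * of_real t * (A$i$k * cnj (A$i$k)) + of_real t * of_real t * bb * (A$i$k * cnj (A$i$k))"
        unfolding cc hk Akk' by (rule ring_id)
      also have "\<dots> = - 2 * of_real t * (A$i$k * cnj (A$i$k)) + of_real t * of_real t * of_real ?b * (A$i$k * cnj (A$i$k))"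
        using bb by simp
      also have "\<dots> = of_real (-2*t*?n + t^2*?n*?b)" unfolding zz
        by (simp add: power2_eq_square)
      finally have e: "A$i$k * ?c + cnj ?c * A$k$i + cnj ?c * A$k$k * ?c = of_real (-2*t*?n + t^2*?n*?b)" .
      have "A$i$i + A$i$k * ?c + cnj ?c * A$k$i + cnj ?c * A$k$k * ?c
            = A$i$i + (A$i$k * ?c + cnj ?c * A$k$i + cnj ?c * A$k$k * ?c)"
        by (simp only: add.assoc)
      also have "\<dots> = A$i$i + of_real (-2*t*?n + t^2*?n*?b)" by (simp only: e)
      finally have e2: "A$i$i + A$i$k * ?c + cnj ?c * A$k$i + cnj ?c * A$k$k * ?c = A$i$i + of_real (-2*t*?n + t^2*?n*?b)" .
      have "Re (A$i$i + A$i$k * ?c + cnj ?c * A$k$i + cnj ?c * A$k$k * ?c) = ?a + (-2*t*?n + t^2*?n*?b)"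
        unfolding e2 by simp
      then show ?thesis using q by linarith
    qed
  qed
  have a0: "?a \<ge> 0" "?b \<ge> 0" using diag_nonneg[OF p] by auto
  show ?thesis
  proof (cases "?b > 0")
    case True
    have "?a - 2*(1/?b)*?n + (1/?b)^2 * ?n * ?b \<ge> 0" by (rule ineq)
    then have "?a - ?n / ?b \<ge> 0" using True by (simp add: power2_eq_square field_simps)
    then show ?thesis using True by (simp add: field_simps)
  next
    case False
    then have b: "?b = 0" using a0 by auto
    show ?thesis
    proof (rule ccontr)
      assume "\<not> ?thesis"
      then have n: "?n > 0" using b by simp
      have "?a - 2*((?a+1)/(2*?n))*?n + ((?a+1)/(2*?n))^2 * ?n * ?b \<ge> 0" by (rule ineq)
      then show False using n b by (simp add: field_simps)
    qed
  qed
qed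

lemma dens_props:
  fixes A :: "complex^'n^'n"
  assumes "A \<in> density_ops"
  shows "(\<Sum>i\<in>UNIV. Re (A$i$i)) = 1" "\<And>i. Re (A$i$i) \<ge> 0" "\<And>i. Re (A$i$i) \<le> 1"
    "\<And>i k. (cmod (A$i$k))^2 \<le> 1" "\<And>i k. cmod (A$i$k) \<le> 1"
    "Re (trace (A ** A)) = (\<Sum>i\<in>UNIV. \<Sum>k\<in>UNIV. (cmod (A$i$k))^2)"
    "Re (trace (A ** A)) \<le> 1"
proof -
  have h: "hermitian_mat A" and p: "psd_mat A" and t: "trace A = 1"
    using assms by (auto simp: density_ops_def)
  show s: "(\<Sum>i\<in>UNIV. Re (A$i$i)) = 1"
    using arg_cong[OF t, of Re] by (simp add: trace_def)
  show nn: "Re (A$i$i) \<ge> 0" for i by (rule diag_nonneg[OF p])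
  show le1: "Re (A$i$i) \<le> 1" for i
  proof -
    have "Re (A$i$i) \<le> (\<Sum>i\<in>UNIV. Re (A$i$i))"
      by (rule member_le_sum) (auto intro: nn)
    then show ?thesis using s by simp
  qed
  show c2: "(cmod (A$i$k))^2 \<le> 1" for i k
  proof -
    have "(cmod (A$i$k))^2 \<le> Re (A$i$i) * Re (A$k$k)" by (rule offdiag_bound[OF h p])
    also have "\<dots> \<le> 1 * 1" by (rule mult_mono) (auto intro: nn le1)
    finally show ?thesis by simp
  qed
  show "cmod (A$i$k) \<le> 1" for i k
    using c2[of i k] by (simp add: power_le_one_iff abs_square_le_1)
  show q: "Re (trace (A ** A)) = (\<Sum>i\<in>UNIV. \<Sum>k\<in>UNIV. (cmod (A$i$k))^2)"
  proof -
    have "trace (A ** A) = (\<Sum>i\<in>UNIV. \<Sum>k\<in>UNIV. A$i$k * A$k$i)"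
      by (simp add: trace_def matrix_matrix_mult_def)
    also have "\<dots> = (\<Sum>i\<in>UNIV. \<Sum>k\<in>UNIV. of_real ((cmod (A$i$k))^2))"
    proof (intro sum.cong refl)
      fix i k
      have "A$k$i = cnj (A$i$k)" using h unfolding hermitian_mat_def by blast
      then show "A$i$k * A$k$i = of_real ((cmod (A$i$k))^2)"
        by (simp add: complex_norm_square[symmetric] del: of_real_power)
    qed
    finally show ?thesis by simp
  qed
  have "(\<Sum>i\<in>UNIV. \<Sum>k\<in>UNIV. (cmod (A$i$k))^2) \<le> (\<Sum>i\<in>UNIV. \<Sum>k\<in>UNIV. Re (A$i$i) * Re (A$k$k))"
    by (intro sum_mono offdiag_bound[OF h p])
  also have "\<dots> = (\<Sum>i\<in>UNIV. Re (A$i$i)) * (\<Sum>k\<in>UNIV. Re (A$k$k))"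
    by (simp add: sum_product)
  finally show "Re (trace (A ** A)) \<le> 1" using q s by simp
qed

lemma norm_mat_le:
  fixes A :: "complex^'n^'n"
  assumes "\<And>i k. cmod (A$i$k) \<le> B"
  shows "norm A \<le> real CARD('n) * real CARD('n) * B"
proof -
  have "norm A \<le> (\<Sum>i\<in>UNIV. norm (A$i))"
    unfolding norm_vec_def by (rule L2_set_le_sum) auto
  also have "\<dots> \<le> (\<Sum>i\<in>(UNIV::'n set). (\<Sum>k\<in>(UNIV::'n set). B))"
  proof (rule sum_mono)
    fix i
    have "norm (A$i) \<le> (\<Sum>k\<in>UNIV. norm (A$i$k))"
      unfolding norm_vec_def by (rule L2_set_le_sum) auto
    also have "\<dots> \<le> (\<Sum>k\<in>(UNIV::'n set). B)" by (rule sum_mono) (simp add: assms)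
    finally show "norm (A$i) \<le> (\<Sum>k\<in>(UNIV::'n set). B)" .
  qed
  finally show ?thesis by simp
qed

lemma cont_comp: "continuous_on S (\<lambda>A::complex^'n^'n. A $ i $ k)"
  by (rule continuous_on_component[OF continuous_on_component[OF continuous_on_id]])

lemma cont_sq: "continuous_on UNIV (\<lambda>A::complex^'n^'n. A ** A)"
  unfolding matrix_matrix_mult_def
  by (intro continuous_on_vec_lambda continuous_on_sum continuous_on_mult cont_comp)

lemma final_arith:
  fixes d V s Eq P :: real
  assumes d: "d \<ge> 2" and V: "0 \<le> V" and s: "s^2 \<le> 1 - Eq" and P: "P = Eq - V" and P0: "P \<ge> 0"
  shows "V = 0 \<or> (1/d)*(1 + sqrt(d-1)* sqrt(d*(s^2+P) - 1)) < 1 - V/4"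
proof (cases "V = 0")
  case False
  then have Vp: "V > 0" using V by simp
  define x where "x = s^2 + P"
  have x0: "x \<ge> 0" using P0 by (simp add: x_def)
  have x1: "x \<le> 1 - V" using s P by (simp add: x_def)
  define a where "a = d - 1"
  define t where "t = d * V"
  have a1: "a \<ge> 1" using d by (simp add: a_def)
  have "d*x \<le> d*(1-V)" using x1 d by (intro mult_left_mono) auto
  then have yle: "d*x - 1 \<le> a - t" by (simp add: a_def t_def algebra_simps)
  have yge: "d*x - 1 \<ge> -1" using x0 d by simp
  have t2a: "t \<le> 2*a" using yle yge a1 by linarith
  have key: "sqrt a * sqrt (d*x - 1) \<le> a - t/2"
  proof (cases "d*x - 1 \<ge> 0")
    case True
    have "sqrt a * sqrt (d*x - 1) = sqrt (a * (d*x - 1))" by (simp add: real_sqrt_mult)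
    also have "\<dots> \<le> sqrt (a * (a - t))" using True a1 yle
      by (intro real_sqrt_le_mono mult_left_mono) auto
    also have "\<dots> \<le> sqrt ((a - t/2)^2)"
      by (intro real_sqrt_le_mono) (simp add: power2_eq_square algebra_simps)
    also have "\<dots> = a - t/2" using t2a by simp
    finally show ?thesis .
  next
    case False
    then have "sqrt (d*x - 1) < 0" by simp
    then have "sqrt a * sqrt (d*x - 1) \<le> 0" using a1 by (simp add: mult_nonneg_nonpos)
    then show ?thesis using t2a by simp
  qed
  have "(1/d)*(1 + sqrt(d-1)* sqrt(d*(s^2+P) - 1)) \<le> (1/d)*(1 + (a - t/2))"
    using key d by (intro mult_left_mono) (auto simp: a_def x_def)
  also have "\<dots> = 1 - V/2" using d by (simp add: a_def t_def field_simps)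
  also have "\<dots> < 1 - V/4" using Vp by simp
  finally show ?thesis by simp
qed simp

lemma jensen_sq:
  fixes X :: "'a \<Rightarrow> real"
  assumes "prob_space M" "integrable M X" "integrable M (\<lambda>x. (X x)^2)"
  shows "(integral\<^sup>L M X)^2 \<le> integral\<^sup>L M (\<lambda>x. (X x)^2)"
proof -
  interpret prob_space M by fact
  have "0 \<le> variance X" by (rule variance_positive)
  then show ?thesis using variance_eq[OF assms(2,3)] by simp
qed

lemma measI:
  assumes "sets M = sets (restrict_space borel S)" "continuous_on UNIV f"
  shows "f \<in> borel_measurable M"
proof -
  have e: "borel_measurable M = borel_measurable (restrict_space borel S)"
    by (rule measurable_cong_sets[OF assms(1) refl])
  show ?thesis unfolding e
    by (rule measurable_restrict_space1[OF borel_measurable_continuous_onI[OF assms(2)]])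
qed


lemma intI:
  fixes f :: "'a::topological_space \<Rightarrow> 'b::{banach,second_countable_topology}" and S :: "'a set"
  assumes "prob_space M" "sets M = sets (restrict_space borel S)" "continuous_on UNIV f"
    "\<And>x. x \<in> S \<Longrightarrow> norm (f x) \<le> B"
  shows "integrable M f"
proof -
  interpret prob_space M by fact
  have sp: "space M = S" using sets_eq_imp_space_eq[OF assms(2)] by (simp add: space_restrict_space)
  show ?thesis
    by (rule integrable_const_bound[where B=B]) (auto simp: sp assms(4) intro!: AE_I2 measI[OF assms(2,3)])
qed

lemma comp_int:
  fixes f :: "'a \<Rightarrow> complex^'n^'n"
  assumes "integrable M f"
  shows "integral\<^sup>L M f $ i $ k = integral\<^sup>L M (\<lambda>x. f x $ i $ k)"
  using integral_bounded_linear[OF bounded_linear_compose[OF bounded_linear_vec_nth bounded_linear_vec_nth] assms, of i k]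
  by simp

lemma sq_comp_bound:
  fixes A :: "complex^'n^'n"
  assumes "A \<in> density_ops"
  shows "cmod ((A ** A) $ i $ k) \<le> real CARD('n)"
proof -
  have "cmod ((A ** A) $ i $ k) = cmod (\<Sum>l\<in>UNIV. A$i$l * A$l$k)"
    by (simp add: matrix_matrix_mult_def)
  also have "\<dots> \<le> (\<Sum>l\<in>UNIV. cmod (A$i$l * A$l$k))" by (rule norm_sum)
  also have "\<dots> \<le> (\<Sum>l\<in>(UNIV::'n set). 1)"
  proof (rule sum_mono)
    fix l
    have "cmod (A$i$l) * cmod (A$l$k) \<le> 1 * 1"
      using dens_props(5)[OF assms] by (intro mult_mono) auto
    then show "cmod (A$i$l * A$l$k) \<le> 1" by (simp add: norm_mult)
  qed
  finally show ?thesis by simp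
qed

lemma cont_q: "continuous_on UNIV (\<lambda>A::complex^'n^'n. Re (trace (A ** A)))"
  unfolding trace_def
  by (intro continuous_on_Re continuous_on_sum continuous_on_component[OF continuous_on_component[OF cont_sq]])

theorem corollary2:
  fixes M :: "(complex^'n^'n) measure"
  assumes d2: "CARD('n) \<ge> 2"
    and prob: "prob_space M"
    and sets_M: "sets M = sets (restrict_space borel (density_ops :: (complex^'n^'n) set))"
  defines "B1 \<equiv> 1 - (1/4) * Re (trace ((integral\<^sup>L M (\<lambda>\<rho>. \<rho> ** \<rho>))
                        - (integral\<^sup>L M (\<lambda>\<rho>. \<rho>)) ** (integral\<^sup>L M (\<lambda>\<rho>. \<rho>))))"
    and "B2 \<equiv> (1 / real CARD('n)) * (1 + sqrt (real CARD('n) - 1) *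
              sqrt (real CARD('n) *
                   ((integral\<^sup>L M (\<lambda>\<rho>. sqrt (1 - Re (trace (\<rho> ** \<rho>))))) ^ 2
                    + Re (trace ((integral\<^sup>L M (\<lambda>\<rho>. \<rho>)) ** (integral\<^sup>L M (\<lambda>\<rho>. \<rho>)))))
                   - 1))"
  shows "B1 = 1 \<or> B2 < B1"
proof -
  interpret P: prob_space M by (rule prob)
  let ?D = "density_ops :: (complex^'n^'n) set"
  have sp: "space M = ?D" using sets_eq_imp_space_eq[OF sets_M] by (simp add: space_restrict_space)
  define d where "d = real CARD('n)"
  define q where "q = (\<lambda>A::complex^'n^'n. Re (trace (A ** A)))"
  define E1 where "E1 = integral\<^sup>L M (\<lambda>\<rho>. \<rho>)"
  define E2 where "E2 = integral\<^sup>L M (\<lambda>\<rho>. \<rho> ** \<rho>)"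
  define s where "s = integral\<^sup>L M (\<lambda>\<rho>. sqrt (1 - q \<rho>))"
  define Eq where "Eq = integral\<^sup>L M q"
  define P where "P = Re (trace (E1 ** E1))"
  define V where "V = Re (trace (E2 - E1 ** E1))"
  have int1: "integrable M (\<lambda>\<rho>::complex^'n^'n. \<rho>)"
    by (rule intI[OF prob sets_M continuous_on_id, where B="d*d*1"])
       (unfold d_def, rule norm_mat_le, rule dens_props(5))
  have int2: "integrable M (\<lambda>\<rho>::complex^'n^'n. \<rho> ** \<rho>)"
    by (rule intI[OF prob sets_M cont_sq, where B="d*d*d"])
       (unfold d_def, rule norm_mat_le, rule sq_comp_bound)
  have intc: "integrable M (\<lambda>\<rho>::complex^'n^'n. \<rho> $ i $ k)" for i k
    by (rule intI[OF prob sets_M cont_comp, where B=1]) (rule dens_props(5))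
  have intc2: "integrable M (\<lambda>\<rho>::complex^'n^'n. (\<rho> ** \<rho>) $ i $ k)" for i k
    by (rule intI[OF prob sets_M continuous_on_component[OF continuous_on_component[OF cont_sq]], where B=d])
       (unfold d_def, rule sq_comp_bound)
  have intRe: "integrable M (\<lambda>\<rho>::complex^'n^'n. Re (\<rho> $ i $ k))" for i k
    using intc by auto
  have intIm: "integrable M (\<lambda>\<rho>::complex^'n^'n. Im (\<rho> $ i $ k))" for i k
    using intc by auto
  have intRe2: "integrable M (\<lambda>\<rho>::complex^'n^'n. (Re (\<rho> $ i $ k))^2)" for i k
    by (rule intI[OF prob sets_M, where B=1]) (rule continuous_on_power[OF continuous_on_Re[OF cont_comp]],
        simp add: abs_square_le_1, meson abs_Re_le_cmod dens_props(5) order_trans)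
  have intIm2: "integrable M (\<lambda>\<rho>::complex^'n^'n. (Im (\<rho> $ i $ k))^2)" for i k
    by (rule intI[OF prob sets_M, where B=1]) (rule continuous_on_power[OF continuous_on_Im[OF cont_comp]],
        simp add: abs_square_le_1, meson abs_Im_le_cmod dens_props(5) order_trans)
  have qD: "0 \<le> q \<rho> \<and> q \<rho> \<le> 1" if "\<rho> \<in> ?D" for \<rho>
    using dens_props(6,7)[OF that] unfolding q_def by (auto intro!: sum_nonneg)
  have intq: "integrable M q"
    by (rule intI[OF prob sets_M, where B=1]) (unfold q_def, rule cont_q, use qD in \<open>auto simp: q_def\<close>)
  have ints: "integrable M (\<lambda>\<rho>. sqrt (1 - q \<rho>))"
    by (rule intI[OF prob sets_M, where B=1]) (unfold q_def, rule continuous_on_real_sqrt[OF continuous_on_diff[OF continuous_on_const cont_q]], use qD in \<open>auto simp: q_def\<close>)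
  have ints2: "integrable M (\<lambda>\<rho>. (sqrt (1 - q \<rho>))^2)"
    by (rule intI[OF prob sets_M, where B=1]) (unfold q_def, rule continuous_on_power[OF continuous_on_real_sqrt[OF continuous_on_diff[OF continuous_on_const cont_q]]], use qD in \<open>auto simp: q_def\<close>)
  have "s^2 \<le> integral\<^sup>L M (\<lambda>\<rho>. (sqrt (1 - q \<rho>))^2)"
    unfolding s_def by (rule jensen_sq[OF prob ints ints2])
  also have "\<dots> = integral\<^sup>L M (\<lambda>\<rho>. 1 - q \<rho>)"
    by (rule Bochner_Integration.integral_cong[OF refl]) (auto simp: sp dest: qD)
  also have "\<dots> = 1 - Eq" unfolding Eq_def using intq by (simp add: P.prob_space)
  finally have sle: "s^2 \<le> 1 - Eq" .
  have intcm: "integrable M (\<lambda>\<rho>::complex^'n^'n. (cmod (\<rho> $ i $ k))^2)" for i k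
    using intRe2[of i k] intIm2[of i k] by (simp add: cmod_power2)
  have EqS: "Eq = (\<Sum>i\<in>UNIV. \<Sum>k\<in>UNIV. integral\<^sup>L M (\<lambda>\<rho>. (cmod (\<rho> $ i $ k))^2))"
  proof -
    have "Eq = integral\<^sup>L M (\<lambda>\<rho>. \<Sum>i\<in>UNIV. \<Sum>k\<in>UNIV. (cmod (\<rho> $ i $ k))^2)"
      unfolding Eq_def by (rule Bochner_Integration.integral_cong[OF refl]) (auto simp: sp q_def dens_props(6))
    also have "\<dots> = (\<Sum>i\<in>UNIV. \<Sum>k\<in>UNIV. integral\<^sup>L M (\<lambda>\<rho>. (cmod (\<rho> $ i $ k))^2))"
      using intcm by (simp add: Bochner_Integration.integral_sum)
    finally show ?thesis .
  qed
  have E2tr: "Re (trace E2) = Eq"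
  proof -
    have "Re (trace E2) = (\<Sum>i\<in>UNIV. Re (E2 $ i $ i))" by (simp add: trace_def)
    also have "\<dots> = (\<Sum>i\<in>UNIV. integral\<^sup>L M (\<lambda>\<rho>. Re ((\<rho> ** \<rho>) $ i $ i)))"
      unfolding E2_def by (simp add: comp_int[OF int2] intc2)
    also have "\<dots> = integral\<^sup>L M (\<lambda>\<rho>. \<Sum>i\<in>UNIV. Re ((\<rho> ** \<rho>) $ i $ i))"
      by (rule Bochner_Integration.integral_sum[symmetric]) (use intc2 in auto)
    also have "\<dots> = Eq" unfolding Eq_def q_def by (simp add: trace_def)
    finally show ?thesis .
  qed
  have E1c: "E1 $ i $ k = integral\<^sup>L M (\<lambda>\<rho>. \<rho> $ i $ k)" for i k
    unfolding E1_def by (rule comp_int[OF int1])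
  have E1h: "E1 $ k $ i = cnj (E1 $ i $ k)" for i k
  proof -
    have "E1 $ k $ i = integral\<^sup>L M (\<lambda>\<rho>. cnj (\<rho> $ i $ k))"
      unfolding E1c
    proof (rule Bochner_Integration.integral_cong)
      fix \<rho> assume "\<rho> \<in> space M"
      then have "hermitian_mat \<rho>" by (simp add: sp density_ops_def)
      then show "\<rho> $ k $ i = cnj (\<rho> $ i $ k)" unfolding hermitian_mat_def by blast
    qed simp
    then show ?thesis by (simp add: E1c)
  qed
  have PS: "P = (\<Sum>i\<in>UNIV. \<Sum>k\<in>UNIV. (cmod (E1 $ i $ k))^2)"
  proof -
    have "trace (E1 ** E1) = (\<Sum>i\<in>UNIV. \<Sum>k\<in>UNIV. E1$i$k * E1$k$i)"
      by (simp add: trace_def matrix_matrix_mult_def)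
    also have "\<dots> = (\<Sum>i\<in>UNIV. \<Sum>k\<in>UNIV. of_real ((cmod (E1$i$k))^2))"
    proof (intro sum.cong refl)
      fix i k
      show "E1$i$k * E1$k$i = of_real ((cmod (E1$i$k))^2)"
        unfolding E1h[of k i] by (simp add: complex_norm_square[symmetric] del: of_real_power)
    qed
    finally show ?thesis unfolding P_def by simp
  qed
  have P0: "P \<ge> 0" unfolding PS by (intro sum_nonneg) auto
  have comp_le: "(cmod (E1 $ i $ k))^2 \<le> integral\<^sup>L M (\<lambda>\<rho>. (cmod (\<rho> $ i $ k))^2)" for i k
  proof -
    have "(cmod (E1 $ i $ k))^2 = (integral\<^sup>L M (\<lambda>\<rho>. Re (\<rho> $ i $ k)))^2 + (integral\<^sup>L M (\<lambda>\<rho>. Im (\<rho> $ i $ k)))^2"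
      by (simp add: E1c cmod_power2 intc)
    also have "\<dots> \<le> integral\<^sup>L M (\<lambda>\<rho>. (Re (\<rho> $ i $ k))^2) + integral\<^sup>L M (\<lambda>\<rho>. (Im (\<rho> $ i $ k))^2)"
      by (intro add_mono jensen_sq[OF prob] intRe intIm intRe2 intIm2)
    also have "\<dots> = integral\<^sup>L M (\<lambda>\<rho>. (cmod (\<rho> $ i $ k))^2)"
      by (simp add: cmod_power2 intRe2 intIm2)
    finally show ?thesis .
  qed
  have VP: "V = Eq - P" unfolding V_def P_def using E2tr by (simp add: trace_sub)
  have V0: "V \<ge> 0"
  proof -
    have "P \<le> Eq" unfolding PS EqS by (intro sum_mono comp_le)
    then show ?thesis using VP by simp
  qed
  have d: "d \<ge> 2" using d2 by (simp add: d_def)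
  have B1e: "B1 = 1 - V/4" unfolding B1_def V_def E1_def E2_def by simp
  have B2e: "B2 = (1/d)*(1 + sqrt(d-1) * sqrt(d*(s^2+P) - 1))"
    unfolding B2_def d_def s_def q_def P_def E1_def by simp
  from final_arith[OF d V0 sle _ P0] VP have "V = 0 \<or> (1/d)*(1 + sqrt(d-1) * sqrt(d*(s^2+P) - 1)) < 1 - V/4"
    by simp
  then show ?thesis unfolding B1e B2e by auto
qed

end
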